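(* For $h=2$ the universal variety equals the quasi-shuffle group component: $\mathcal V_{d,2}=\hat{\mathcal G}^{2}(\mathfrak A_d)$ for every $d\ge1$.
   Context: $\mathtt{K}$ is an algebraically closed field of characteristic zero, $\mathfrak A_d=\mathtt{K}[X_1,\dots,X_d]/\{\text{constants}\}$ with basis the non-constant monomials, graded by degree. Words in monomials form a basis of $T(\mathfrak A_d)$; $T^{h}(\mathfrak A_d)$ (resp. $T^{\le h}$) is the span of words of height (sum of degrees of letters) $=h$ (resp. $\le h$), $\pi^h$ the projection onto $T^h$, and $\langle\sum\alpha_w w,v\rangle=\alpha_v$. For $x=(x_1,\dots,x_N)\in(\mathtt{K}^d)^N$, $\langle \mathrm{DS}(x),\mathsf{e}_1\bullet\cdots\bullet\mathsf{e}_k\rangle=\sum_{1\le i_1<\cdots<i_k\le N}\mathsf{e}_1(x_{i_1})\cdots\mathsf{e}_k(x_{i_k})$, and $\mathrm{DS}^h(x)$ is its projection to $T^h(\mathfrak A_d)$. The discrete signature variety $\mathcal V_{d,h,N}$ is the Zariski closure of the image of $\mathrm{DS}^h$ on $(\mathtt{K}^d)^N$; these form an ascending chain in $N$ which stabilizes, and the universal variety $\mathcal V_{d,h}$ is their union. The quasi-shuffle product is defined by $\varepsilon$ a unit and $w\bullet i\ \overline{\sqcup\!\sqcup}\ v\bullet j=(w\ \overline{\sqcup\!\sqcup}\ v\bullet j)\bullet i+(w\bullet i\ \overline{\sqcup\!\sqcup}\ v)\bullet j+(w\ \overline{\sqcup\!\sqcup}\ v)\bullet ij$; $\hat{\mathcal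 G}^{\le h}(\mathfrak A_d)$ is the set of $\mathsf{u}\in T^{\le h}(\mathfrak A_d)$ with coefficient $1$ on $\varepsilon$ and $\langle\mathsf{u},w\ \overline{\sqcup\!\sqcup}\ u\rangle=\langle\mathsf{u},w\rangle\langle\mathsf{u},u\rangle$ whenever the heights sum to $\le h$, and $\hat{\mathcal G}^{h}(\mathfrak A_d)=\pi^h(\hat{\mathcal G}^{\le h}(\mathfrak A_d))$. The paper conjectures $\mathcal V_{d,h}=\hat{\mathcal G}^{h}(\mathfrak A_d)$ for all $h$; this corollary is the case $h=2$. *)

theory Defs
  imports "HOL-Computational_Algebra.Polynomial" "HOL-Library.Multiset"
begin

text \<open>A monomial X^alpha in d variables is its exponent vector alpha (a nat list of
length d); non-constant means total degree > 0. A word is a list of monomials.\<close>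

type_synonym letter = "nat list"
type_synonym word = "letter list"

definition letters :: "nat \<Rightarrow> letter set" where
  "letters d = {\<alpha>. length \<alpha> = d \<and> sum_list \<alpha> > 0}"

definition height :: "word \<Rightarrow> nat" where
  "height w = sum_list (map sum_list w)"

definition words_h :: "nat \<Rightarrow> nat \<Rightarrow> word set" where
  "words_h d h = {w. set w \<subseteq> letters d \<and> height w = h}"

definition Tspace :: "nat \<Rightarrow> nat \<Rightarrow> (word \<Rightarrow> 'a::zero) set" where
  "Tspace d h = {u. \<forall>w. w \<notin> words_h d h \<longrightarrow> u w = 0}"

definition Tle :: "nat \<Rightarrow> nat \<Rightarrow> (word \<Rightarrow> 'a::zero) set" where
  "Tle d h = {u. \<forall>w. \<not>(set w \<subseteq> letters d \<and> height w \<le> h) \<longrightarrow> u w = 0}"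

definition proj_h :: "nat \<Rightarrow> nat \<Rightarrow> (word \<Rightarrow> 'a::zero) \<Rightarrow> (word \<Rightarrow> 'a)" where
  "proj_h d h u = (\<lambda>w. if w \<in> words_h d h then u w else 0)"

definition eval_mono :: "letter \<Rightarrow> (nat \<Rightarrow> 'a::comm_ring_1) \<Rightarrow> 'a" where
  "eval_mono \<alpha> p = (\<Prod>i<length \<alpha>. p i ^ (\<alpha> ! i))"

definition DS_coef :: "(nat \<Rightarrow> nat \<Rightarrow> 'a::comm_ring_1) \<Rightarrow> nat \<Rightarrow> word \<Rightarrow> 'a" where
  "DS_coef x N w = (\<Sum>is\<in>{is. length is = length w \<and> sorted_wrt (<) is \<and> set is \<subseteq> {..<N}}.
        \<Prod>m<length w. eval_mono (w ! m) (x (is ! m)))"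

definition DS_h :: "nat \<Rightarrow> nat \<Rightarrow> nat \<Rightarrow> (nat \<Rightarrow> nat \<Rightarrow> 'a::comm_ring_1) \<Rightarrow> (word \<Rightarrow> 'a)" where
  "DS_h d h N x = proj_h d h (DS_coef x N)"

inductive_set polyfun :: "'w set \<Rightarrow> (('w \<Rightarrow> 'a::comm_ring_1) \<Rightarrow> 'a) set" for C where
  pconst: "(\<lambda>u. c) \<in> polyfun C"
| pvar: "w \<in> C \<Longrightarrow> (\<lambda>u. u w) \<in> polyfun C"
| padd: "p \<in> polyfun C \<Longrightarrow> q \<in> polyfun C \<Longrightarrow> (\<lambda>u. p u + q u) \<in> polyfun C"
| pmult: "p \<in> polyfun C \<Longrightarrow> q \<in> polyfun C \<Longrightarrow> (\<lambda>u. p u * q u) \<in> polyfun C"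

definition zariski_closure :: "nat \<Rightarrow> nat \<Rightarrow> (word \<Rightarrow> 'a::comm_ring_1) set \<Rightarrow> (word \<Rightarrow> 'a) set" where
  "zariski_closure d h S = {v \<in> Tspace d h. \<forall>p \<in> polyfun (words_h d h).
      (\<forall>s\<in>S. p s = 0) \<longrightarrow> p v = 0}"

definition DS_variety :: "nat \<Rightarrow> nat \<Rightarrow> nat \<Rightarrow> (word \<Rightarrow> 'a::comm_ring_1) set" where
  "DS_variety d h N = zariski_closure d h (range (DS_h d h N))"

definition universal_variety :: "nat \<Rightarrow> nat \<Rightarrow> (word \<Rightarrow> 'a::comm_ring_1) set" where
  "universal_variety d h = (\<Union>N. DS_variety d h N)"

text \<open>Quasi-shuffle, defined on reversed words (recursion on last letters);
  the product of letters i j is the monomial product (sum of exponent vectors).\<close>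
fun qsh_rev :: "word \<Rightarrow> word \<Rightarrow> word multiset" where
  "qsh_rev [] v = {#v#}"
| "qsh_rev w [] = {#w#}"
| "qsh_rev (i # w) (j # v) =
     image_mset ((#) i) (qsh_rev w (j # v))
   + image_mset ((#) j) (qsh_rev (i # w) v)
   + image_mset ((#) (map2 (+) i j)) (qsh_rev w v)"

definition qsh :: "word \<Rightarrow> word \<Rightarrow> word multiset" where
  "qsh w v = image_mset rev (qsh_rev (rev w) (rev v))"

definition pair :: "(word \<Rightarrow> 'a::comm_monoid_add) \<Rightarrow> word multiset \<Rightarrow> 'a" where
  "pair u M = sum_mset (image_mset u M)"

definition Ghat_le :: "nat \<Rightarrow> nat \<Rightarrow> (word \<Rightarrow> 'a::comm_ring_1) set" where
  "Ghat_le d h = {u \<in> Tle d h. u [] = 1 \<and>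
     (\<forall>w v. set w \<subseteq> letters d \<and> set v \<subseteq> letters d \<and> height w + height v \<le> h
        \<longrightarrow> pair u (qsh w v) = u w * u v)}"

definition Ghat :: "nat \<Rightarrow> nat \<Rightarrow> (word \<Rightarrow> 'a::comm_ring_1) set" where
  "Ghat d h = proj_h d h ` Ghat_le d h"

end

theory Submission
  imports Defs
begin



definition S1 :: "(nat \<Rightarrow> 'p) \<Rightarrow> nat \<Rightarrow> ('p \<Rightarrow> 'a::comm_ring_1) \<Rightarrow> 'a" where
  "S1 x N f = (\<Sum>k<N. f (x k))"
definition S2 :: "(nat \<Rightarrow> 'p) \<Rightarrow> nat \<Rightarrow> ('p \<Rightarrow> 'a::comm_ring_1) \<Rightarrow> ('p \<Rightarrow> 'a) \<Rightarrow> 'a" where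
  "S2 x N f g = (\<Sum>l<N. \<Sum>k<l. f (x k) * g (x l))"

lemma S_diag: "(\<Sum>k<N. f (x k) * g (x k)) = S1 x N f * S1 x N g - S2 x N f g - S2 x N g f"
  by (induction N) (simp_all add: S1_def S2_def algebra_simps sum_distrib_left sum_distrib_right)

lemma DS_coef_single: "DS_coef x N [a] = (\<Sum>k<N. eval_mono a (x k))"
proof -
  have "{is. length is = length [a] \<and> sorted_wrt (<) is \<and> set is \<subseteq> {..<N}} = (\<lambda>k. [k]) ` {..<N}"
    by (auto simp: length_Suc_conv)
  then show ?thesis unfolding DS_coef_def by (simp add: sum.reindex inj_on_def)
qed

lemma DS_coef_pair: "DS_coef x N [a,b] = (\<Sum>l<N. \<Sum>k<l. eval_mono a (x k) * eval_mono b (x l))"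
proof -
  have e: "{is. length is = length [a,b] \<and> sorted_wrt (<) is \<and> set is \<subseteq> {..<N}}
     = (\<lambda>(l,k). [k,l]) ` (SIGMA l:{..<N}. {..<l})"
  proof (rule set_eqI, rule iffI)
    fix js assume "js \<in> {is. length is = length [a,b] \<and> sorted_wrt (<) is \<and> set is \<subseteq> {..<N}}"
    then obtain k l where "js = [k,l]" "k < l" "l < N" by (auto simp: length_Suc_conv)
    then show "js \<in> (\<lambda>(l,k). [k,l]) ` (SIGMA l:{..<N}. {..<l})" by (auto intro!: image_eqI[where x="(l,k)"])
  qed auto
  have inj: "inj_on (\<lambda>(l,k). [k,l]) (SIGMA l:{..<N}. {..<l})" by (auto simp: inj_on_def)
  have "DS_coef x N [a,b] = (\<Sum>(l,k)\<in>(SIGMA l:{..<N}. {..<l}). eval_mono a (x k) * eval_mono b (x l))"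
    unfolding DS_coef_def e by (subst sum.reindex[OF inj]) (simp add: numeral_2_eq_2 lessThan_Suc case_prod_unfold mult.commute)
  also have "\<dots> = (\<Sum>l<N. \<Sum>k<l. eval_mono a (x k) * eval_mono b (x l))"
    by (simp add: sum.Sigma)
  finally show ?thesis .
qed

lemma eval_map2: "length a = length b \<Longrightarrow> eval_mono (map2 (+) a b) p = eval_mono a p * eval_mono b p"
  by (simp add: eval_mono_def power_add prod.distrib)

lemma sum_map2: "length a = length b \<Longrightarrow> sum_list (map2 (+) a (b::nat list)) = sum_list a + sum_list b"
  by (induction a b rule: list_induct2) auto

lemma map2_comm: "map2 (+) a b = map2 (+) b (a::nat list)"
  by (rule nth_equalityI) auto

definition ev :: "nat \<Rightarrow> nat \<Rightarrow> nat list" where "ev d i = (replicate d 0)[i := 1]"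

lemma length_ev[simp]: "length (ev d i) = d" by (simp add: ev_def)

lemma zero_rep: "sum_list (xs::nat list) = 0 \<Longrightarrow> \<exists>n. xs = replicate n 0 \<and> n = length xs"
  by (intro exI[of _ "length xs"]) (auto intro!: replicate_eqI simp: sum_list_eq_0_iff)

lemma deg1: "sum_list (a::nat list) = 1 \<Longrightarrow> \<exists>i<length a. a = ev (length a) i"
proof (induction a)
  case Nil then show ?case by simp
next
  case (Cons x xs)
  show ?case
  proof (cases x)
    case 0
    with Cons obtain i where i: "i < length xs" "xs = ev (length xs) i" by auto
    obtain n where n: "n = length xs" by blast
    have xs: "xs = ev n i" using i n by simp
    have "x # xs = ev (Suc n) (Suc i)" unfolding xs 0 by (simp add: ev_def)
    then have "x # xs = ev (length (x#xs)) (Suc i)" using n by simp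
    then show ?thesis using i(1) by (metis Suc_less_eq length_Cons)
  next
    case (Suc n)
    with Cons have "n = 0" "sum_list xs = 0" by auto
    then obtain m where m: "xs = replicate m 0" by (metis zero_rep)
    have "x = 1" using Suc \<open>n = 0\<close> by simp
    then have e: "x # xs = ev (Suc m) 0" unfolding m by (simp add: ev_def)
    show ?thesis by (rule exI[of _ 0]) (simp only: e length_ev, simp)
  qed
qed

lemma eval_ev: "i < d \<Longrightarrow> eval_mono (ev d i) p = p i"
proof -
  assume i: "i < d"
  have "eval_mono (ev d i) p = (\<Prod>k<d. if k = i then p k else 1)"
    unfolding eval_mono_def by (intro prod.cong) (auto simp: ev_def nth_list_update)
  also have "\<dots> = p i" using i by (simp add: prod.delta)
  finally show ?thesis .
qed
lemma map2_rep0: "length ys = n \<Longrightarrow> map2 (+) (replicate n 0) ys = (ys::nat list)"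
  by (induction ys arbitrary: n) auto

lemma deg2_2: "sum_list (xs::nat list) = 1 
  \<Longrightarrow> \<exists>a b. length a = length (1#xs) \<and> length b = length (1#xs) \<and> sum_list a = 1 \<and> sum_list b = 1 \<and> 1#xs = map2 (+) a b"
  using map2_rep0[of xs "length xs"] by (intro exI[of _ "1#replicate (length xs) 0"] exI[of _ "0#xs"]) simp

lemma a1: "map2 (+) (replicate n 0) (replicate n (0::nat)) = replicate n 0"
  by (induction n) auto
lemma a2: "(2::nat) # replicate n 0 = map2 (+) (1#replicate n 0) (1#replicate n 0)"
  using a1[of n] by simp

lemma deg2_3: "sum_list (xs::nat list) = 0 
  \<Longrightarrow> \<exists>a b. length a = length (2#xs) \<and> length b = length (2#xs) \<and> sum_list a = 1 \<and> sum_list b = 1 \<and> 2#xs = map2 (+) a b"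
proof -
  assume "sum_list xs = 0"
  from zero_rep[OF this] obtain n where r: "xs = replicate n 0" by blast
  show ?thesis
    apply (rule exI[of _ "1#replicate n 0"], rule exI[of _ "1#replicate n 0"])
    unfolding r using a2[of n] by simp
qed

lemma deg2: "sum_list (m::nat list) = 2 \<Longrightarrow> \<exists>a b. length a = length m \<and> length b = length m \<and> sum_list a = 1 \<and> sum_list b = 1 \<and> m = map2 (+) a b"
proof (induction m)
  case Nil then show ?case by simp
next
  case (Cons x xs)
  have "x \<le> 2" using Cons.prems by simp
  then have "x = 0 \<or> x = 1 \<or> x = 2" by linarith
  then show ?case
  proof (elim disjE)
    assume x: "x = 0"
    then have "sum_list xs = 2" using Cons.prems by simp
    then obtain a b where ab: "length a = length xs" "length b = length xs" "sum_list a = 1" "sum_list b = 1" and m: "xs = map2 (+) a b"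
      using Cons.IH by blast
    have "x # xs = map2 (+) (0#a) (0#b)" unfolding x m by simp
    moreover have "length (0#a) = length (x#xs)" "length (0#b) = length (x#xs)" "sum_list (0#a) = 1" "sum_list (0#b) = 1"
      using ab by simp_all
    ultimately show ?thesis by (intro exI conjI) assumption+
  next
    assume x: "x = 1"
    then have "sum_list xs = 1" using Cons.prems by simp
    then show ?thesis unfolding x by (rule deg2_2)
  next
    assume x: "x = 2"
    then have "sum_list xs = 0" using Cons.prems by simp
    then show ?thesis unfolding x by (rule deg2_3)
  qed
qed




definition L1 :: "(nat \<Rightarrow> 'a::comm_ring_1) list \<Rightarrow> nat \<Rightarrow> 'a" where
  "L1 ps i = sum_list (map (\<lambda>p. p i) ps)"

fun L2 :: "(nat \<Rightarrow> 'a::comm_ring_1) list \<Rightarrow> nat \<Rightarrow> nat \<Rightarrow> 'a" where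
  "L2 [] i j = 0"
| "L2 (p # ps) i j = p i * L1 ps j + L2 ps i j"

lemma L1_append[simp]: "L1 (ps @ qs) i = L1 ps i + L1 qs i"
  by (simp add: L1_def)

lemma L1_Cons[simp]: "L1 (p # ps) i = p i + L1 ps i" and L1_Nil[simp]: "L1 [] i = 0"
  by (simp_all add: L1_def)

lemma L2_append: "L2 (ps @ qs) i j = L2 ps i j + L2 qs i j + L1 ps i * L1 qs j"
  by (induction ps) (simp_all add: algebra_simps)

lemma S1_L1: "S1 ((!) ps) (length ps) (\<lambda>p. p i) = L1 ps i"
  by (simp add: S1_def L1_def sum_list_sum_nth atLeast0LessThan)

lemma S2_L2: "S2 ((!) ps) (length ps) (\<lambda>p. p i) (\<lambda>p. p j) = L2 ps i j"
proof (induction ps rule: rev_induct)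
  case Nil then show ?case by (simp add: S2_def)
next
  case (snoc q ps)
  have "S2 ((!) (ps @ [q])) (length (ps @ [q])) (\<lambda>p. p i) (\<lambda>p. p j)
      = S2 ((!) ps) (length ps) (\<lambda>p. p i) (\<lambda>p. p j) + S1 ((!) ps) (length ps) (\<lambda>p. p i) * q j"
    by (simp add: S2_def S1_def nth_append sum_distrib_right)
  then show ?case using snoc by (simp add: S1_L1 L2_append)
qed

definition Ach :: "(nat \<Rightarrow> nat \<Rightarrow> 'a::comm_ring_1) set" where
  "Ach = {B. \<exists>ps. (\<forall>i. L1 ps i = 0) \<and> (\<forall>i j. L2 ps i j = B i j)}"

lemma Ach_0: "(\<lambda>i j. 0) \<in> Ach"
  unfolding Ach_def by (rule CollectI, rule exI[of _ "[]"]) simp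

lemma Ach_add: "B \<in> Ach \<Longrightarrow> C \<in> Ach \<Longrightarrow> (\<lambda>i j. B i j + C i j) \<in> Ach"
  unfolding Ach_def
proof (clarify)
  fix ps qs assume "\<forall>i. L1 ps i = 0" "\<forall>i j. L2 ps i j = B i j" "\<forall>i. L1 qs i = 0" "\<forall>i j. L2 qs i j = C i j"
  then show "\<exists>rs. (\<forall>i. L1 rs i = 0) \<and> (\<forall>i j. L2 rs i j = B i j + C i j)"
    by (intro exI[of _ "ps @ qs"]) (simp add: L2_append)
qed

lemma Ach_sum: "finite S \<Longrightarrow> (\<And>s. s \<in> S \<Longrightarrow> F s \<in> Ach) \<Longrightarrow> (\<lambda>i j. \<Sum>s\<in>S. F s i j) \<in> Ach"
proof (induction S rule: finite_induct)
  case empty then show ?case by (simp add: Ach_0)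
next
  case (insert x S)
  have "(\<lambda>i j. F x i j + (\<Sum>s\<in>S. F s i j)) \<in> Ach"
    using insert by (intro Ach_add) auto
  then show ?case using insert by simp
qed

lemma Ach_sq:
  fixes z :: "nat \<Rightarrow> 'a::comm_ring_1"
  assumes "s * s = - c"
  shows "(\<lambda>i j. c * (z i * z j)) \<in> Ach"
  unfolding Ach_def
proof (rule CollectI, rule exI[of _ "[\<lambda>i. s * z i, \<lambda>i. - (s * z i)]"], intro conjI allI)
  fix i j
  show "L1 [\<lambda>i. s * z i, \<lambda>i. - (s * z i)] i = 0" by simp
  have "L2 [\<lambda>i. s * z i, \<lambda>i. - (s * z i)] i j = - ((s * s) * (z i * z j))" by (simp add: algebra_simps)
  then show "L2 [\<lambda>i. s * z i, \<lambda>i. - (s * z i)] i j = c * (z i * z j)" using assms by simp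
qed

lemma Ach_tri:
  fixes p q :: "nat \<Rightarrow> 'a::comm_ring_1"
  shows "(\<lambda>i j. p i * q j - (p i + q i) * (p j + q j)) \<in> Ach"
  unfolding Ach_def
proof (rule CollectI, rule exI[of _ "[p, q, \<lambda>i. - (p i + q i)]"], intro conjI allI)
  fix i j
  show "L1 [p, q, \<lambda>i. - (p i + q i)] i = 0" by simp
  show "L2 [p, q, \<lambda>i. - (p i + q i)] i j = p i * q j - (p i + q i) * (p j + q j)" by (simp add: algebra_simps)
qed

lemma Ach_outer:
  fixes p q :: "nat \<Rightarrow> 'a::comm_ring_1"
  assumes sq: "\<forall>c::'a. \<exists>s. s * s = c"
  shows "(\<lambda>i j. p i * q j) \<in> Ach"
proof -
  obtain s where s: "s * s = - (1::'a)" using sq by blast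
  have "(\<lambda>i j. p i * q j - (p i + q i) * (p j + q j) + 1 * ((p i + q i) * (p j + q j))) \<in> Ach"
    by (rule Ach_add[OF Ach_tri Ach_sq[OF s]])
  then show ?thesis by simp
qed

lemma construct:
  fixes y :: "nat \<Rightarrow> 'a::comm_ring_1" and A :: "nat \<Rightarrow> nat \<Rightarrow> 'a"
  assumes sq: "\<forall>c::'a. \<exists>s. s * s = c"
  shows "\<exists>ps. (\<forall>i. L1 ps i = y i) \<and> (\<forall>i<d. \<forall>j<d. L2 ps i j = A i j)"
proof -
  let ?F = "\<lambda>(a,b) i j. (if i = a then 1 else 0) * (if j = b then A a b else (0::'a))"
  have "(\<lambda>i j. \<Sum>s\<in>{..<d}\<times>{..<d}. ?F s i j) \<in> Ach"
    by (rule Ach_sum) (auto intro: Ach_outer[OF sq])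
  then obtain ps where ps: "\<forall>i. L1 ps i = 0" "\<forall>i j. L2 ps i j = (\<Sum>s\<in>{..<d}\<times>{..<d}. ?F s i j)"
    unfolding Ach_def by blast
  have ev: "(\<Sum>s\<in>{..<d}\<times>{..<d}. ?F s i j) = A i j" if "i < d" "j < d" for i j
  proof -
    have "(\<Sum>s\<in>{..<d}\<times>{..<d}. ?F s i j) = (\<Sum>s\<in>{(i,j)}. ?F s i j)"
      by (rule sum.mono_neutral_right) (use that in \<open>auto split: if_splits\<close>)
    then show ?thesis by simp
  qed
  show ?thesis
  proof (intro exI[of _ "ps @ [y]"] conjI allI impI)
    fix i show "L1 (ps @ [y]) i = y i" using ps by simp
  next
    fix i j assume "i < d" "j < d"
    then show "L2 (ps @ [y]) i j = A i j" using ps ev by (simp add: L2_append)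
  qed
qed




definition L1set :: "nat \<Rightarrow> letter set" where
  "L1set d = {a. a \<in> letters d \<and> sum_list a = 1}"

definition Sv :: "(word \<Rightarrow> 'a::comm_ring_1) \<Rightarrow> letter \<Rightarrow> letter \<Rightarrow> 'a" where
  "Sv v a b = v [a,b] + v [b,a] + v [map2 (+) a b]"

lemma Sv_sym: "Sv v a b = Sv v b a"
  unfolding Sv_def using map2_comm[of a b] by (simp add: algebra_simps)

lemma L1set_letters: "a \<in> L1set d \<Longrightarrow> length a = d \<and> sum_list a = 1"
  by (simp add: L1set_def letters_def)

lemma pair_word: "a \<in> L1set d \<Longrightarrow> b \<in> L1set d \<Longrightarrow> [a,b] \<in> words_h d 2"
  by (auto simp: L1set_def words_h_def height_def)

lemma sum_word: "a \<in> L1set d \<Longrightarrow> b \<in> L1set d \<Longrightarrow> [map2 (+) a b] \<in> words_h d 2"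
  using sum_map2[of a b] by (auto simp: L1set_def words_h_def height_def letters_def)

lemma height_ge: "set w \<subseteq> letters d \<Longrightarrow> length w \<le> height w"
proof (induction w)
  case Nil then show ?case by (simp add: height_def)
next
  case (Cons a w)
  then have "sum_list a \<ge> 1" by (auto simp: letters_def)
  with Cons show ?case by (simp add: height_def)
qed

lemma height1: "set w \<subseteq> letters d \<Longrightarrow> height w = 1 \<Longrightarrow> \<exists>a. w = [a] \<and> a \<in> L1set d"
proof -
  assume s: "set w \<subseteq> letters d" and h: "height w = 1"
  have "length w \<le> 1" using height_ge[OF s] h by simp
  moreover have "w \<noteq> []" using h by (auto simp: height_def)
  ultimately obtain a where "w = [a]" by (cases w) auto
  then show ?thesis using s h by (auto simp: height_def L1set_def)
qed

lemma height2: "w \<in> words_h d 2 \<Longrightarrow> (\<exists>m. w = [m] \<and> length m = d \<and> sum_list m = 2) \<or> (\<exists>a b. w = [a,b] \<and> a \<in> L1set d \<and> b \<in> L1set d)"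
proof -
  assume w: "w \<in> words_h d 2"
  then have s: "set w \<subseteq> letters d" and h: "height w = 2" by (auto simp: words_h_def)
  have "length w \<le> 2" using height_ge[OF s] h by simp
  then consider "w = []" | m where "w = [m]" | a b where "w = [a,b]"
    by (cases w rule: remdups_adj.cases) auto
  then show ?thesis
  proof cases
    case 1 then show ?thesis using h by (simp add: height_def)
  next
    case 2 then show ?thesis using h s by (simp add: height_def letters_def)
  next
    case 3
    then have "sum_list a \<ge> 1" "sum_list b \<ge> 1" "sum_list a + sum_list b = 2" using s h by (auto simp: letters_def height_def)
    then have "sum_list a = 1" "sum_list b = 1" by auto
    then show ?thesis using 3 s by (auto simp: L1set_def)
  qed
qed

lemma qsh_rev_Nil2: "qsh_rev w [] = {#w#}"
  by (cases w) auto

lemma qsh_Nil1: "qsh [] v = {#v#}"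
  by (simp add: qsh_def)

lemma qsh_Nil2: "qsh w [] = {#w#}"
  by (simp add: qsh_def qsh_rev_Nil2)

lemma qsh_11: "qsh [a] [b] = {#[b,a], [a,b], [map2 (+) a b]#}"
  by (simp add: qsh_def qsh_rev_Nil2)

lemma pair_11: "pair u (qsh [a] [b]) = u [b,a] + u [a,b] + u [map2 (+) a b]"
  by (simp add: qsh_11 pair_def algebra_simps)

lemma polyfun_minus: "p \<in> polyfun C \<Longrightarrow> q \<in> polyfun C \<Longrightarrow> (\<lambda>u. p u - q u) \<in> polyfun C"
proof -
  assume p: "p \<in> polyfun C" and q: "q \<in> polyfun C"
  have "(\<lambda>u. p u + (\<lambda>u. - 1) u * q u) \<in> polyfun C"
    by (intro polyfun.padd p polyfun.pmult q polyfun.pconst)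
  then show ?thesis by simp
qed

lemma polyfun_Sv: "a \<in> L1set d \<Longrightarrow> b \<in> L1set d \<Longrightarrow> (\<lambda>u. Sv u a b) \<in> polyfun (words_h d 2)"
  unfolding Sv_def
  by (intro polyfun.padd polyfun.pvar pair_word sum_word) auto

lemma DS_Sv:
  assumes "a \<in> L1set d" "b \<in> L1set d"
  shows "Sv (DS_h d 2 N x) a b = S1 x N (eval_mono a) * S1 x N (eval_mono b)"
proof -
  have l: "length a = length b" using assms by (simp add: L1set_letters)
  have "Sv (DS_h d 2 N x) a b = DS_coef x N [a,b] + DS_coef x N [b,a] + DS_coef x N [map2 (+) a b]"
    using pair_word[OF assms] pair_word[OF assms(2,1)] sum_word[OF assms]
    by (simp add: Sv_def DS_h_def proj_h_def)
  also have "\<dots> = S2 x N (eval_mono a) (eval_mono b) + S2 x N (eval_mono b) (eval_mono a)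
      + (\<Sum>k<N. eval_mono a (x k) * eval_mono b (x k))"
    by (simp add: DS_coef_pair DS_coef_single S2_def eval_map2[OF l])
  also have "\<dots> = S1 x N (eval_mono a) * S1 x N (eval_mono b)"
    by (simp add: S_diag)
  finally show ?thesis .
qed

lemma part_A:
  fixes v :: "word \<Rightarrow> 'a::field"
  assumes sq: "\<forall>c::'a. \<exists>s. s * s = c"
    and vin: "v \<in> DS_variety d 2 N"
  shows "v \<in> Ghat d 2"
proof -
  have Tv: "v \<in> Tspace d 2"
    and clos: "\<And>p. p \<in> polyfun (words_h d 2) \<Longrightarrow> (\<forall>s\<in>range (DS_h d 2 N). p s = 0) \<Longrightarrow> p v = 0"
    using vin by (auto simp: DS_variety_def zariski_closure_def)
  have minor: "Sv v a a * Sv v b c = Sv v a b * Sv v a c"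
    if ab: "a \<in> L1set d" "b \<in> L1set d" "c \<in> L1set d" for a b c
  proof -
    let ?P = "\<lambda>u. Sv u a a * Sv u b c - Sv u a b * Sv u a c"
    have "?P \<in> polyfun (words_h d 2)"
      using ab by (intro polyfun_minus polyfun.pmult polyfun_Sv)
    moreover have "\<forall>s\<in>range (DS_h d 2 N). ?P s = 0"
      using ab by (auto simp: DS_Sv)
    ultimately have "?P v = 0" by (rule clos)
    then show ?thesis by simp
  qed
  have "\<exists>Y. \<forall>a\<in>L1set d. \<forall>b\<in>L1set d. Sv v a b = Y a * Y b"
  proof (cases "\<forall>a\<in>L1set d. Sv v a a = 0")
    case True
    show ?thesis
    proof (intro exI[of _ "\<lambda>_. 0"] ballI)
      fix a b assume a: "a \<in> L1set d" and b: "b \<in> L1set d"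
      have "Sv v a b * Sv v a b = 0" using minor[OF a b b] True a b by simp
      then show "Sv v a b = 0 * 0" by simp
    qed
  next
    case False
    then obtain a0 where a0: "a0 \<in> L1set d" "Sv v a0 a0 \<noteq> 0" by blast
    obtain c where c: "c * c = Sv v a0 a0" using sq by blast
    then have c0: "c \<noteq> 0" using a0 by auto
    show ?thesis
    proof (intro exI[of _ "\<lambda>b. Sv v a0 b / c"] ballI)
      fix a b assume a: "a \<in> L1set d" and b: "b \<in> L1set d"
      have "Sv v a0 b / c * (Sv v a0 a / c) = (Sv v a0 a * Sv v a0 b) / (c * c)"
        by (simp add: field_simps)
      also have "\<dots> = (Sv v a0 a0 * Sv v a b) / Sv v a0 a0" using minor[OF a0(1) a b] c by simp
      also have "\<dots> = Sv v a b" using a0 by simp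
      finally show "Sv v a b = Sv v a0 a / c * (Sv v a0 b / c)" by (simp add: mult.commute)
    qed
  qed
  then obtain Y where Y: "\<And>a b. a \<in> L1set d \<Longrightarrow> b \<in> L1set d \<Longrightarrow> Sv v a b = Y a * Y b" by blast
  define u where "u = (\<lambda>w. if w \<in> words_h d 2 then v w else if w = [] then 1
      else if (\<exists>a. w = [a] \<and> a \<in> L1set d) then Y (hd w) else (0::'a))"
  have nil_notin: "[] \<notin> words_h d 2" by (simp add: words_h_def height_def)
  have single_notin: "[a] \<notin> words_h d 2" if "a \<in> L1set d" for a
    using that by (simp add: words_h_def height_def L1set_def)
  have u_single: "u [a] = Y a" if "a \<in> L1set d" for a
    using that single_notin[OF that] by (simp add: u_def)
  have u_nil: "u [] = 1" using nil_notin by (simp add: u_def)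
  have u_w: "u w = v w" if "w \<in> words_h d 2" for w using that by (simp add: u_def)
  have "u \<in> Ghat_le d 2"
    unfolding Ghat_le_def
  proof (intro CollectI conjI allI impI)
    show "u \<in> Tle d 2"
      unfolding Tle_def
    proof (intro CollectI allI impI)
      fix w :: word assume nw: "\<not> (set w \<subseteq> letters d \<and> height w \<le> 2)"
      then have "w \<notin> words_h d 2" by (auto simp: words_h_def)
      moreover have "w \<noteq> []" using nw by (auto simp: height_def)
      moreover have "\<not> (\<exists>a. w = [a] \<and> a \<in> L1set d)" using nw by (auto simp: height_def L1set_def)
      ultimately show "u w = 0" by (auto simp: u_def)
    qed
    show "u [] = 1" by (rule u_nil)
  next
    fix w w' :: word
    assume "set w \<subseteq> letters d \<and> set w' \<subseteq> letters d \<and> height w + height w' \<le> 2"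
    then have s: "set w \<subseteq> letters d" "set w' \<subseteq> letters d" and h: "height w + height w' \<le> 2" by auto
    show "pair u (qsh w w') = u w * u w'"
    proof (cases "w = [] \<or> w' = []")
      case True
      then show ?thesis
        by (elim disjE) (simp_all add: qsh_Nil1 qsh_Nil2 pair_def u_nil)
    next
      case False
      then have "length w \<ge> 1" "length w' \<ge> 1" by (auto simp: Suc_le_eq)
      then have "height w = 1" "height w' = 1" using height_ge[OF s(1)] height_ge[OF s(2)] h by auto
      then obtain a b where a: "w = [a]" "a \<in> L1set d" and b: "w' = [b]" "b \<in> L1set d"
        using height1 s by metis
      have "pair u (qsh w w') = v [b,a] + v [a,b] + v [map2 (+) a b]"
        unfolding a b pair_11 using pair_word[OF a(2) b(2)] pair_word[OF b(2) a(2)] sum_word[OF a(2) b(2)]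
        by (simp add: u_w)
      also have "\<dots> = Sv v a b" by (simp add: Sv_def algebra_simps)
      also have "\<dots> = u w * u w'" unfolding a b using Y a b u_single by simp
      finally show ?thesis .
    qed
  qed
  moreover have "proj_h d 2 u = v"
  proof
    fix w show "proj_h d 2 u w = v w"
      using Tv u_w by (auto simp: proj_h_def Tspace_def)
  qed
  ultimately show ?thesis unfolding Ghat_def by (metis image_eqI)
qed




lemma deg1_L: "a \<in> L1set d \<Longrightarrow> \<exists>i<d. a = ev d i"
  using deg1[of a] by (auto simp: L1set_def letters_def)

lemma part_B:
  fixes v :: "word \<Rightarrow> 'a::field"
  assumes sq: "\<forall>c::'a. \<exists>s. s * s = c"
    and vin: "v \<in> Ghat d 2"
  shows "\<exists>N. v \<in> DS_variety d 2 N"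
proof -
  obtain u where u: "u \<in> Ghat_le d 2" and vu: "v = proj_h d 2 u"
    using vin by (auto simp: Ghat_def)
  have rel: "pair u (qsh w w') = u w * u w'"
    if "set w \<subseteq> letters d" "set w' \<subseteq> letters d" "height w + height w' \<le> 2" for w w'
    using u that by (auto simp: Ghat_le_def)
  define y where "y i = u [ev d i]" for i
  define A where "A i j = u [ev d i, ev d j]" for i j
  obtain ps where ps1: "\<And>i. L1 ps i = y i" and ps2: "\<And>i j. i < d \<Longrightarrow> j < d \<Longrightarrow> L2 ps i j = A i j"
    using construct[OF sq, of y d A] by blast
  define x where "x = (!) ps"
  define N where "N = length ps"
  have ev_L: "ev d i \<in> L1set d" if "i < d" for i
    using that by (simp add: L1set_def letters_def ev_def sum_list_update)
  have "DS_h d 2 N x = v"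
  proof
    fix w
    show "DS_h d 2 N x w = v w"
    proof (cases "w \<in> words_h d 2")
      case False
      then show ?thesis by (simp add: DS_h_def vu proj_h_def)
    next
      case True
      then have vw: "v w = u w" and dw: "DS_h d 2 N x w = DS_coef x N w" by (simp_all add: DS_h_def vu proj_h_def)
      from height2[OF True] show ?thesis
      proof (elim disjE exE conjE)
        fix a b assume w: "w = [a,b]" and a: "a \<in> L1set d" and b: "b \<in> L1set d"
        obtain i j where i: "i < d" "a = ev d i" and j: "j < d" "b = ev d j"
          using deg1_L[OF a] deg1_L[OF b] by blast
        have "DS_coef x N w = S2 x N (\<lambda>p. p i) (\<lambda>p. p j)"
          unfolding w DS_coef_pair S2_def i(2) j(2) using i j by (simp add: eval_ev)
        also have "\<dots> = A i j" unfolding x_def N_def S2_L2 using ps2 i j by simp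
        finally show ?thesis unfolding dw vw using w i j by (simp add: A_def)
      next
        fix m assume w: "w = [m]" and lm: "length m = d" and sm: "sum_list m = 2"
        obtain a b where ab: "length a = d" "length b = d" "sum_list a = 1" "sum_list b = 1" and m: "m = map2 (+) a b"
          using deg2[OF sm] lm by metis
        have aL: "a \<in> L1set d" and bL: "b \<in> L1set d" using ab by (auto simp: L1set_def letters_def)
        obtain i j where i: "i < d" "a = ev d i" and j: "j < d" "b = ev d j"
          using deg1_L[OF aL] deg1_L[OF bL] by blast
        have "DS_coef x N w = (\<Sum>k<N. x k i * x k j)"
          unfolding w DS_coef_single m using ab i j by (simp add: eval_map2 eval_ev)
        also have "\<dots> = S1 x N (\<lambda>p. p i) * S1 x N (\<lambda>p. p j) - S2 x N (\<lambda>p. p i) (\<lambda>p. p j) - S2 x N (\<lambda>p. p j) (\<lambda>p. p i)"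
          by (rule S_diag)
        also have "\<dots> = y i * y j - A i j - A j i"
          unfolding x_def N_def S1_L1 S2_L2 using ps1 ps2 i j by simp
        also have "\<dots> = u [m]"
        proof -
          have "pair u (qsh [a] [b]) = u [a] * u [b]"
            using aL bL by (intro rel) (auto simp: L1set_def height_def)
          then have "u [b,a] + u [a,b] + u [m] = u [a] * u [b]" unfolding pair_11 m .
          then show ?thesis unfolding y_def A_def using i j by (simp add: algebra_simps)
        qed
        finally show ?thesis using dw vw w by simp
      qed
    qed
  qed
  moreover have "v \<in> Tspace d 2" unfolding vu by (simp add: Tspace_def proj_h_def)
  ultimately have "v \<in> DS_variety d 2 N"
    unfolding DS_variety_def zariski_closure_def by (auto intro: range_eqI[of _ _ x])
  then show ?thesis by blast
qed

theorem corollary5p7: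
  fixes d :: nat
  assumes alg_closed: "\<forall>p :: 'a :: field_char_0 poly. degree p > 0 \<longrightarrow> (\<exists>z. poly p z = 0)"
    and d_pos: "d \<ge> 1"
  shows "(universal_variety d 2 :: (word \<Rightarrow> 'a) set) = Ghat d 2"
proof -
  have sq: "\<forall>c::'a. \<exists>s. s * s = c"
  proof
    fix c :: 'a
    have "degree [:-c, 0, 1:] > 0" by simp
    then obtain z where "poly [:-c, 0, 1:] z = 0" using alg_closed by blast
    then have "z * z = c" by (simp add: algebra_simps)
    then show "\<exists>s. s * s = c" by blast
  qed
  show ?thesis
  proof
    show "(universal_variety d 2 :: (word \<Rightarrow> 'a) set) \<subseteq> Ghat d 2"
      unfolding universal_variety_def using part_A[OF sq] by blast
    show "Ghat d 2 \<subseteq> (universal_variety d 2 :: (word \<Rightarrow> 'a) set)"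
      unfolding universal_variety_def using part_B[OF sq] by blast
  qed
qed


end
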